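(* Let $P,Q$ be plane posets with the same number $n$ of elements, and let $\theta_{P,Q}:P\to Q$ be the unique bijection which is increasing for the total orders $\leq$ of $P$ and $Q$. The following assertions are equivalent: (1) for all $x,y\in P$, if $\theta_{P,Q}(x)\leq_h\theta_{P,Q}(y)$ in $Q$ then $x\leq_h y$ in $P$; (2) for all $x,y\in P$, if $x\leq_r y$ in $P$ then $\theta_{P,Q}(x)\leq_r\theta_{P,Q}(y)$ in $Q$.
   Context: A plane poset is a finite set $P$ with two partial orders $\leq_h$ and $\leq_r$ such that for all $x\neq y$ in $P$, $x$ and $y$ are comparable for $\leq_h$ if and only if they are not comparable for $\leq_r$. It is known that on any plane poset the relation $x\leq y$ iff ($x\leq_h y$ or $x\leq_r y$) is a total order. *)

theory Defs
  imports Main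
begin

definition plane_poset :: "'a set \<Rightarrow> 'a rel \<Rightarrow> 'a rel \<Rightarrow> bool" where
  "plane_poset P H R \<longleftrightarrow>
     finite P \<and> partial_order_on P H \<and> partial_order_on P R \<and>
     (\<forall>x\<in>P. \<forall>y\<in>P. x \<noteq> y \<longrightarrow>
        (((x, y) \<in> H \<or> (y, x) \<in> H) \<longleftrightarrow> \<not> ((x, y) \<in> R \<or> (y, x) \<in> R)))"

definition plane_le :: "'a rel \<Rightarrow> 'a rel \<Rightarrow> 'a rel" where
  "plane_le H R = H \<union> R"

end

theory Submission
  imports Defs
begin

theorem lemma9:
  fixes P :: "'a set" and HP RP :: "'a rel"
    and Q :: "'b set" and HQ RQ :: "'b rel"
    and \<theta> :: "'a \<Rightarrow> 'b"
  assumes "plane_poset P HP RP"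
    and "plane_poset Q HQ RQ"
    and "card P = card Q"
    and "bij_betw \<theta> P Q"
    and "\<forall>x\<in>P. \<forall>y\<in>P. (x, y) \<in> plane_le HP RP \<longrightarrow> (\<theta> x, \<theta> y) \<in> plane_le HQ RQ"
  shows "(\<forall>x\<in>P. \<forall>y\<in>P. (\<theta> x, \<theta> y) \<in> HQ \<longrightarrow> (x, y) \<in> HP)
     \<longleftrightarrow> (\<forall>x\<in>P. \<forall>y\<in>P. (x, y) \<in> RP \<longrightarrow> (\<theta> x, \<theta> y) \<in> RQ)"
proof -
  have pP: "partial_order_on P HP" "partial_order_on P RP"
    and cP: "\<forall>x\<in>P. \<forall>y\<in>P. x \<noteq> y \<longrightarrow>
        (((x, y) \<in> HP \<or> (y, x) \<in> HP) \<longleftrightarrow> \<not> ((x, y) \<in> RP \<or> (y, x) \<in> RP))"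
    using assms(1) unfolding plane_poset_def by auto
  have pQ: "partial_order_on Q HQ" "partial_order_on Q RQ"
    and cQ: "\<forall>x\<in>Q. \<forall>y\<in>Q. x \<noteq> y \<longrightarrow>
        (((x, y) \<in> HQ \<or> (y, x) \<in> HQ) \<longleftrightarrow> \<not> ((x, y) \<in> RQ \<or> (y, x) \<in> RQ))"
    using assms(2) unfolding plane_poset_def by auto
  have aHP: "antisym HP" and aHQ: "antisym HQ" using pP pQ by (auto simp: partial_order_on_def)
  have rHP: "refl_on P HP" and rRQ: "refl_on Q RQ" using pP pQ
    by (auto simp: partial_order_on_def preorder_on_def)
  have inj: "inj_on \<theta> P" and img: "\<theta> ` P = Q" using assms(4) by (auto simp: bij_betw_def)
  have mono: "\<And>x y. x\<in>P \<Longrightarrow> y\<in>P \<Longrightarrow> (x, y) \<in> HP \<or> (x,y) \<in> RP \<Longrightarrow> (\<theta> x, \<theta> y) \<in> HQ \<or> (\<theta> x, \<theta> y) \<in> RQ"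
    using assms(5) unfolding plane_le_def by blast
  have inQ: "\<And>x. x \<in> P \<Longrightarrow> \<theta> x \<in> Q" using img by blast
  show ?thesis
  proof
    assume A: "\<forall>x\<in>P. \<forall>y\<in>P. (\<theta> x, \<theta> y) \<in> HQ \<longrightarrow> (x, y) \<in> HP"
    show "\<forall>x\<in>P. \<forall>y\<in>P. (x, y) \<in> RP \<longrightarrow> (\<theta> x, \<theta> y) \<in> RQ"
    proof (intro ballI impI)
      fix x y assume x: "x \<in> P" and y: "y \<in> P" and r: "(x, y) \<in> RP"
      show "(\<theta> x, \<theta> y) \<in> RQ"
      proof (cases "x = y")
        case True then show ?thesis using rRQ inQ[OF x] by (auto simp: refl_on_def)
      next
        case False
        from mono[OF x y] r have "(\<theta> x, \<theta> y) \<in> HQ \<or> (\<theta> x, \<theta> y) \<in> RQ" by blast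
        moreover have "(\<theta> x, \<theta> y) \<notin> HQ"
        proof
          assume "(\<theta> x, \<theta> y) \<in> HQ"
          with A x y have "(x, y) \<in> HP" by blast
          with cP x y False r show False by blast
        qed
        ultimately show ?thesis by blast
      qed
    qed
  next
    assume B: "\<forall>x\<in>P. \<forall>y\<in>P. (x, y) \<in> RP \<longrightarrow> (\<theta> x, \<theta> y) \<in> RQ"
    show "\<forall>x\<in>P. \<forall>y\<in>P. (\<theta> x, \<theta> y) \<in> HQ \<longrightarrow> (x, y) \<in> HP"
    proof (intro ballI impI)
      fix x y assume x: "x \<in> P" and y: "y \<in> P" and h: "(\<theta> x, \<theta> y) \<in> HQ"
      show "(x, y) \<in> HP"
      proof (cases "x = y")
        case True then show ?thesis using rHP x by (auto simp: refl_on_def)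
      next
        case False
        have ne: "\<theta> x \<noteq> \<theta> y" using inj x y False by (auto simp: inj_on_def)
        have nR: "\<not> ((\<theta> x, \<theta> y) \<in> RQ \<or> (\<theta> y, \<theta> x) \<in> RQ)"
          using cQ inQ[OF x] inQ[OF y] ne h by blast
        have "(x, y) \<in> HP \<or> (y, x) \<in> HP \<or> (x, y) \<in> RP \<or> (y, x) \<in> RP"
          using cP x y False by blast
        moreover have "(y, x) \<notin> HP"
        proof
          assume "(y, x) \<in> HP"
          with mono[OF y x] nR have "(\<theta> y, \<theta> x) \<in> HQ" by blast
          with h aHQ ne show False by (auto simp: antisym_def)
        qed
        moreover have "(x, y) \<notin> RP" using B x y nR by blast
        moreover have "(y, x) \<notin> RP" using B x y nR by blast
        ultimately show ?thesis by blast
      qed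
    qed
  qed
qed

end
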